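(* Let $B_1,B_2$ be two commuting nilpotent operators on a finite-dimensional complex vector space $V$. Then there exist a nilpotent operator $B_2'$ on $V$ and a vector $w\in V$ such that (i) $B_2'$ commutes with $B_1$; (ii) every linear combination $\alpha B_2+\beta B_2'$ ($\alpha,\beta\in\mathbb C$) is nilpotent; (iii) $w$ is a cyclic vector for the pair $(B_1,B_2')$, i.e. no proper subspace of $V$ invariant under $B_1$ and $B_2'$ contains $w$. *)

theory Defs
  imports "HOL-Analysis.Analysis"
begin

fun mat_power :: "'a::comm_ring_1^'n^'n \<Rightarrow> nat \<Rightarrow> 'a^'n^'n" where
  "mat_power A 0 = mat 1"
| "mat_power A (Suc k) = A ** mat_power A k"

definition nilpotent_mat :: "'a::comm_ring_1^'n^'n \<Rightarrow> bool" where
  "nilpotent_mat A \<longleftrightarrow> (\<exists>k. mat_power A k = 0)"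

definition cyclic_pair :: "'a::field^'n^'n \<Rightarrow> 'a^'n^'n \<Rightarrow> 'a^'n \<Rightarrow> bool" where
  "cyclic_pair A B w \<longleftrightarrow>
     (\<forall>W. vec.subspace W \<and> (\<forall>x\<in>W. A *v x \<in> W) \<and> (\<forall>x\<in>W. B *v x \<in> W) \<and> w \<in> W
          \<longrightarrow> W = UNIV)"

end

theory Submission
  imports Defs
begin

lemma mat_power_add: "mat_power A (a+b) = mat_power A a ** mat_power A b"
  by (induct a) (simp_all add: matrix_mul_assoc)

lemma mat_power_Suc2: "mat_power A (Suc k) = mat_power A k ** A"
  using mat_power_add[of A k 1] by simp

lemma mat_power_comm: "A ** B = B ** A \<Longrightarrow> mat_power A k ** B = B ** mat_power A k"
  by (induct k) (simp_all add: matrix_mul_assoc[symmetric], metis matrix_mul_assoc)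

lemma mat_power_comm_v: "A ** B = B ** A \<Longrightarrow> mat_power A k *v (B *v v) = B *v (mat_power A k *v v)"
  by (simp add: matrix_vector_mul_assoc mat_power_comm)

lemma mat_scal_v: "(mat c :: 'a::comm_ring_1^'n^'n) *v v = c *s v"
  unfolding vec_eq_iff matrix_vector_mult_def mat_def
  by (auto simp: if_distrib if_distribR cong: if_cong)

lemma mat_power_zero_ge: "mat_power A N = 0 \<Longrightarrow> N \<le> j \<Longrightarrow> mat_power A j = 0"
  using mat_power_add[of A "j - N" N] by simp

lemma exists_switch: "P (0::nat) \<Longrightarrow> \<not> P M \<Longrightarrow> \<exists>j. P j \<and> \<not> P (Suc j)"
  by (induct M) auto

lemma linear_span_into:
  assumes "Vector_Spaces.linear (*s) (*s) f" "vec.subspace T" "\<And>x. x \<in> B \<Longrightarrow> f x \<in> T"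
    and "x \<in> vec.span B"
  shows "f x \<in> (T :: ('a::field^'n) set)"
proof -
  interpret f: Vector_Spaces.linear "(*s)" "(*s)" f by fact
  have "vec.subspace {x. f x \<in> T}"
    using assms(2) unfolding vec.subspace_def by (auto simp: f.add f.scale f.zero)
  then show ?thesis using vec.span_induct[OF assms(4), of "\<lambda>x. f x \<in> T"] assms(3) by auto
qed


locale cn =
  fixes X Y :: "complex^'n^'n"
  assumes nX: "nilpotent_mat X" and nY: "nilpotent_mat Y" and cXY: "X ** Y = Y ** X"
begin

definition XV :: "(complex^'n) set" where "XV = range (\<lambda>u. X *v u)"
definition K :: "nat \<Rightarrow> (complex^'n) set" where
  "K m = {v. \<exists>a b. v = a + X *v b \<and> mat_power X m *v a = 0}"
definition Asp :: "(nat \<Rightarrow> complex^'n) \<Rightarrow> nat \<Rightarrow> (complex^'n) set" where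
  "Asp g i = vec.span (g ` {..<i} \<union> XV)"

lemma XV_sub: "vec.subspace XV"
  unfolding vec.subspace_def XV_def
  by (auto simp: image_iff) (metis vec.zero, metis vec.add, metis vec.scale)

lemma XV_Asp: "XV \<subseteq> Asp g i"
  unfolding Asp_def using vec.span_superset by blast

lemma XV_in: "X *v u \<in> XV" unfolding XV_def by auto

lemma XA: "X *v u \<in> Asp g i" using XV_Asp XV_in by blast

lemma Asp_sub: "vec.subspace (Asp g i)"
  unfolding Asp_def by (rule vec.subspace_span)

lemma g_Asp: "j < i \<Longrightarrow> g j \<in> Asp g i"
  unfolding Asp_def by (rule vec.span_base) auto

lemma pow_in: "XV \<subseteq> S \<Longrightarrow> v \<in> S \<Longrightarrow> mat_power X e *v v \<in> S"
proof (cases e)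
  case (Suc e')
  assume "XV \<subseteq> S"
  then show ?thesis using Suc XV_in[of "mat_power X e' *v v"]
    by (auto simp: matrix_vector_mul_assoc)
qed simp

lemma pow_pos_in: "XV \<subseteq> S \<Longrightarrow> 0 < e \<Longrightarrow> mat_power X e *v v \<in> S"
proof (cases e)
  case (Suc e')
  assume "XV \<subseteq> S"
  then show ?thesis using Suc XV_in[of "mat_power X e' *v v"]
    by (auto simp: matrix_vector_mul_assoc)
qed simp

lemma Asp_mono: "i \<le> j \<Longrightarrow> Asp g i \<subseteq> Asp g j"
  unfolding Asp_def by (rule vec.span_mono) auto

lemma Asp_cong: "(\<And>j. j < i \<Longrightarrow> g j = g' j) \<Longrightarrow> Asp g i = Asp g' i"
  unfolding Asp_def by (rule arg_cong[where f=vec.span]) auto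

lemma Asp0: "Asp g 0 = XV"
  unfolding Asp_def using XV_sub vec.span_eq_iff by auto

lemma YX: "Y *v (X *v u) = X *v (Y *v u)"
  by (simp add: matrix_vector_mul_assoc cXY)

lemma K_mono: "m \<le> m' \<Longrightarrow> K m \<subseteq> K m'"
  unfolding K_def
proof clarify
  fix a b assume "m \<le> m'" "mat_power X m *v a = 0"
  then have "mat_power X m' *v a = 0"
    using mat_power_add[of X "m' - m" m] by (simp add: matrix_vector_mul_assoc[symmetric])
  then show "\<exists>a' b'. a + X *v b = a' + X *v b' \<and> mat_power X m' *v a' = 0" by blast
qed

lemma ker_K: "mat_power X m *v b = 0 \<Longrightarrow> b \<in> K m"
  unfolding K_def by (rule CollectI, rule exI[of _ b], rule exI[of _ 0]) simp

lemma K_top: "\<exists>N. K N = UNIV"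
proof -
  obtain N where "mat_power X N = 0" using nX unfolding nilpotent_mat_def by auto
  then have "K N = UNIV" using ker_K[of N] by auto
  then show ?thesis ..
qed

lemma Y_inv:
  assumes "\<And>j. j < i \<Longrightarrow> Y *v g j \<in> Asp g i" "v \<in> Asp g i"
  shows "Y *v v \<in> Asp g i"
proof -
  have XA: "X *v u \<in> Asp g i" for u using XV_Asp XV_in by blast
  have "Y *v x \<in> Asp g i" if "x \<in> g ` {..<i} \<union> XV" for x
    using that assms(1) XA YX unfolding XV_def by auto
  then show ?thesis
    using linear_span_into[OF matrix_vector_mul_linear_gen Asp_sub] assms(2)
    unfolding Asp_def by blast
qed

definition valid :: "nat \<Rightarrow> (nat \<Rightarrow> complex^'n) \<Rightarrow> (nat \<Rightarrow> nat) \<Rightarrow> bool" where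
  "valid k g m \<longleftrightarrow> (\<forall>i<k. mat_power X (m i) *v g i = 0 \<and> g i \<notin> Asp g i \<and> Y *v g i \<in> Asp g i
      \<and> (\<forall>m'<m i. K m' \<subseteq> Asp g i) \<and> (\<forall>j<i. m j \<le> m i))"

lemma step:
  assumes S: "vec.subspace S" "XV \<subseteq> S" "\<forall>v\<in>S. Y *v v \<in> S" "S \<noteq> UNIV"
  shows "\<exists>mm b. (\<forall>m'<mm. K m' \<subseteq> S) \<and> mat_power X mm *v b = 0 \<and> b \<notin> S \<and> Y *v b \<in> S"
proof -
  obtain N where N: "K N = UNIV" using K_top by auto
  have ex: "\<exists>m. \<not> K m \<subseteq> S" using N S(4) by auto
  define mm where "mm = (LEAST m. \<not> K m \<subseteq> S)"
  have nm: "\<not> K mm \<subseteq> S" unfolding mm_def by (rule LeastI_ex[OF ex])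
  have lm: "\<forall>m'<mm. K m' \<subseteq> S" unfolding mm_def using not_less_Least by blast
  obtain v where v: "v \<in> K mm" "v \<notin> S" using nm by auto
  then obtain a b where ab: "v = a + X *v b" "mat_power X mm *v a = 0" unfolding K_def by auto
  have aS: "a \<notin> S"
  proof
    assume "a \<in> S"
    then have "a + X *v b \<in> S" using S(1,2) XV_in unfolding vec.subspace_def by blast
    then show False using v ab by simp
  qed
  obtain M where M: "mat_power Y M = 0" using nY unfolding nilpotent_mat_def by auto
  have "0 \<in> S" using S(1) unfolding vec.subspace_def by auto
  then have "\<not> (mat_power Y M *v a \<notin> S)" using M by simp
  from exists_switch[of "\<lambda>j. mat_power Y j *v a \<notin> S", OF _ this] aS
  obtain j where j: "mat_power Y j *v a \<notin> S" "mat_power Y (Suc j) *v a \<in> S" by auto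
  define c where "c = mat_power Y j *v a"
  have "mat_power X mm *v c = 0"
    unfolding c_def using mat_power_comm_v[of X Y mm, OF cXY] ab(2)
    by (metis (no_types, lifting) cXY mat_power_comm matrix_vector_mul_assoc vec.zero)
  moreover have "Y *v c \<in> S" using j(2) unfolding c_def by (simp add: matrix_vector_mul_assoc)
  ultimately show ?thesis using lm j(1) c_def by blast
qed


lemma valid_pos: "valid k g m \<Longrightarrow> i < k \<Longrightarrow> 0 < m i"
proof (rule ccontr)
  assume v: "valid k g m" "i < k" "\<not> 0 < m i"
  then have "g i = 0" unfolding valid_def by auto
  moreover have "0 \<in> Asp g i" using Asp_sub[of g i] unfolding vec.subspace_def by auto
  ultimately show False using v unfolding valid_def by auto
qed

lemma extend:
  assumes v: "valid k g m" and ne: "Asp g k \<noteq> UNIV"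
  shows "\<exists>g' m'. valid (Suc k) g' m'"
proof -
  have Yi: "\<forall>v\<in>Asp g k. Y *v v \<in> Asp g k"
  proof
    fix x assume x: "x \<in> Asp g k"
    have "Y *v g j \<in> Asp g k" if "j < k" for j
      using v that Asp_mono[of j k g] unfolding valid_def by auto
    then show "Y *v x \<in> Asp g k" using Y_inv x by blast
  qed
  obtain mm b where mb: "\<forall>m'<mm. K m' \<subseteq> Asp g k" "mat_power X mm *v b = 0" "b \<notin> Asp g k"
    "Y *v b \<in> Asp g k"
    using step[OF Asp_sub XV_Asp Yi ne] by blast
  define g' where "g' = g(k := b)"
  define m' where "m' = m(k := mm)"
  have Ac: "Asp g' i = Asp g i" if "i \<le> k" for i
    using that by (intro Asp_cong) (auto simp: g'_def)
  have mono: "m j \<le> mm" if "j < k" for j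
  proof (rule ccontr)
    assume "\<not> m j \<le> mm"
    then have "K mm \<subseteq> Asp g j" using v that unfolding valid_def by auto
    also have "\<dots> \<subseteq> Asp g k" using that by (intro Asp_mono) auto
    finally show False using ker_K[OF mb(2)] mb(3) by auto
  qed
  have "valid (Suc k) g' m'"
    unfolding valid_def
  proof (intro allI impI)
    fix i assume "i < Suc k"
    then consider "i < k" | "i = k" by linarith
    then show "mat_power X (m' i) *v g' i = 0 \<and> g' i \<notin> Asp g' i \<and> Y *v g' i \<in> Asp g' i \<and>
          (\<forall>m'a<m' i. K m'a \<subseteq> Asp g' i) \<and> (\<forall>j<i. m' j \<le> m' i)"
    proof cases
      case 1
      then show ?thesis using v Ac[of i] unfolding valid_def g'_def m'_def by auto
    next
      case 2
      then show ?thesis using mb Ac[of k] mono unfolding g'_def m'_def by auto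
    qed
  qed
  then show ?thesis by blast
qed

lemma construct_t: "\<exists>k g m. valid k g m \<and> (k = t \<or> Asp g k = UNIV)"
proof (induct t)
  case 0
  have "valid 0 (\<lambda>_. 0) (\<lambda>_. 0)" unfolding valid_def by simp
  then show ?case by blast
next
  case (Suc t)
  then obtain k g m where "valid k g m" "k = t \<or> Asp g k = UNIV" by blast
  then show ?case using extend by blast
qed


context
  fixes k g m assumes V: "valid k g m"
begin

lemma V_ker: "i < k \<Longrightarrow> mat_power X (m i) *v g i = 0" using V unfolding valid_def by auto
lemma V_notin: "i < k \<Longrightarrow> g i \<notin> Asp g i" using V unfolding valid_def by auto
lemma V_Y: "i < k \<Longrightarrow> Y *v g i \<in> Asp g i" using V unfolding valid_def by auto
lemma V_K: "i < k \<Longrightarrow> m' < m i \<Longrightarrow> K m' \<subseteq> Asp g i" using V unfolding valid_def by auto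
lemma V_mono: "i < k \<Longrightarrow> j < i \<Longrightarrow> m j \<le> m i" using V unfolding valid_def by auto
lemma V_pos: "i < k \<Longrightarrow> 0 < m i" using valid_pos[OF V] .

lemma V_ker_ge: "i < k \<Longrightarrow> m i \<le> e \<Longrightarrow> mat_power X e *v g i = 0"
  using mat_power_add[of X "e - m i" "m i"] V_ker[of i]
  by (simp add: matrix_vector_mul_assoc[symmetric])

lemma bottom:
  assumes eq: "(\<Sum>i<k. d i *s (mat_power X (m i - 1) *v g i)) = 0"
  shows "\<forall>i<k. d i = 0"
proof (rule ccontr)
  assume "\<not> (\<forall>i<k. d i = 0)"
  define S where "S = {i. i < k \<and> d i \<noteq> 0}"
  have Sne: "S \<noteq> {}" and Sf: "finite S" and Sk: "S \<subseteq> {..<k}"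
    using \<open>\<not> (\<forall>i<k. d i = 0)\<close> unfolding S_def by auto
  define mm where "mm = Min (m ` S)"
  have mmin: "mm \<in> m ` S" unfolding mm_def using Sne Sf by (intro Min_in) auto
  have mle: "i \<in> S \<Longrightarrow> mm \<le> m i" for i unfolding mm_def using Sf by auto
  define T where "T = {i \<in> S. m i = mm}"
  have Tne: "T \<noteq> {}" using mmin unfolding T_def by auto
  have Tf: "finite T" using Sf unfolding T_def by auto
  define i0 where "i0 = Max T"
  have i0T: "i0 \<in> T" unfolding i0_def using Tne Tf by (intro Max_in)
  have i0max: "i \<in> T \<Longrightarrow> i \<le> i0" for i unfolding i0_def using Tf by auto
  have i0k: "i0 < k" and i0m: "m i0 = mm" and di0: "d i0 \<noteq> 0" using i0T unfolding T_def S_def by auto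
  have mmpos: "0 < mm" using V_pos[OF i0k] i0m by simp
  define u where "u = (\<Sum>i\<in>S. d i *s (mat_power X (m i - mm) *v g i))"
  have "mat_power X (mm - 1) *v u = (\<Sum>i\<in>S. d i *s (mat_power X (m i - 1) *v g i))"
  proof -
    have "mat_power X (mm - 1) *v (mat_power X (m i - mm) *v g i) = mat_power X (m i - 1) *v g i"
      if "i \<in> S" for i
      using mat_power_add[of X "mm - 1" "m i - mm"] mle[OF that] mmpos
      by (simp add: matrix_vector_mul_assoc)
    then show ?thesis unfolding u_def by (simp add: vec.sum vec.scale)
  qed
  also have "\<dots> = (\<Sum>i<k. d i *s (mat_power X (m i - 1) *v g i))"
    by (rule sum.mono_neutral_left) (auto simp: S_def)
  finally have "mat_power X (mm - 1) *v u = 0" using eq by simp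
  then have "u \<in> K (mm - 1)" by (rule ker_K)
  then have uA: "u \<in> Asp g i0" using V_K[OF i0k, of "mm - 1"] i0m mmpos by auto
  define r where "r = (\<Sum>i\<in>S - {i0}. d i *s (mat_power X (m i - mm) *v g i))"
  have u_eq: "u = d i0 *s g i0 + r"
    unfolding u_def r_def using i0T Sf i0m by (simp add: T_def sum.remove)
  have rA: "r \<in> Asp g i0"
    unfolding r_def
  proof (rule vec.subspace_sum[OF Asp_sub], rule vec.subspace_scale[OF Asp_sub])
    fix i assume i: "i \<in> S - {i0}"
    show "mat_power X (m i - mm) *v g i \<in> Asp g i0"
    proof (cases "i < i0")
      case True
      then show ?thesis using pow_in[OF XV_Asp g_Asp] by blast
    next
      case False
      then have "i > i0" using i by auto
      then have "i \<notin> T" using i0max by force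
      then have "m i > mm" using i mle unfolding T_def by force
      then show ?thesis using pow_pos_in[OF XV_Asp] by auto
    qed
  qed
  have "d i0 *s g i0 \<in> Asp g i0" using vec.subspace_diff[OF Asp_sub uA rA] u_eq by simp
  then have "inverse (d i0) *s (d i0 *s g i0) \<in> Asp g i0" by (rule vec.subspace_scale[OF Asp_sub])
  then have "g i0 \<in> Asp g i0" using di0 by (simp add: vec.scale_scale)
  then show False using V_notin[OF i0k] by simp
qed

end


lemma indep2:
  assumes V: "valid k g m"
    and eq: "(\<Sum>i<k. \<Sum>a<m i. c i a *s (mat_power X a *v g i)) = 0"
  shows "\<forall>i<k. \<forall>a<m i. c i a = 0"
proof (rule ccontr)
  assume nz: "\<not> (\<forall>i<k. \<forall>a<m i. c i a = 0)"
  define T where "T = {(i,a). i < k \<and> a < m i \<and> c i a \<noteq> 0}"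
  have Tf: "finite T"
    by (rule finite_subset[of _ "Sigma {..<k} (\<lambda>i. {..<m i})"]) (auto simp: T_def)
  have Tne: "T \<noteq> {}" using nz unfolding T_def by auto
  define s where "s = Max ((\<lambda>(i,a). m i - 1 - a) ` T)"
  have "s \<in> (\<lambda>(i,a). m i - 1 - a) ` T" unfolding s_def using Tf Tne by (intro Max_in) auto
  then obtain i1 a1 where i1: "(i1, a1) \<in> T" "s = m i1 - 1 - a1" by auto
  have sge: "(i,a) \<in> T \<Longrightarrow> m i - 1 - a \<le> s" for i a
  proof -
    assume "(i,a) \<in> T"
    then have "m i - 1 - a \<in> (\<lambda>(i,a). m i - 1 - a) ` T" by force
    then show ?thesis unfolding s_def by (rule Max_ge[OF finite_imageI[OF Tf]])
  qed
  define d where "d i = (if s \<le> m i - 1 then c i (m i - 1 - s) else 0)" for i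
  have inner: "(\<Sum>a<m i. c i a *s (mat_power X (s + a) *v g i)) = d i *s (mat_power X (m i - 1) *v g i)"
    if ik: "i < k" for i
  proof -
    have mp: "0 < m i" using V_pos[OF V ik] .
    have "(\<Sum>a<m i. c i a *s (mat_power X (s + a) *v g i)) =
          (\<Sum>a<m i. if a = m i - 1 - s then (if s \<le> m i - 1 then c i a *s (mat_power X (m i - 1) *v g i) else 0) else 0)"
    proof (rule sum.cong[OF refl])
      fix a assume a: "a \<in> {..<m i}"
      show "c i a *s (mat_power X (s + a) *v g i) =
          (if a = m i - 1 - s then (if s \<le> m i - 1 then c i a *s (mat_power X (m i - 1) *v g i) else 0) else 0)"
      proof (cases "a = m i - 1 - s \<and> s \<le> m i - 1")
        case True
        then have "s + a = m i - 1" by linarith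
        then show ?thesis using True by simp
      next
        case False
        show ?thesis
        proof (cases "c i a = 0")
          case True then show ?thesis using False by auto
        next
          case cnz: False
          then have "(i,a) \<in> T" using a ik unfolding T_def by auto
          then have "m i - 1 - a \<le> s" by (rule sge)
          then have "m i \<le> s + a" using False a by auto
          then have "mat_power X (s + a) *v g i = 0" by (rule V_ker_ge[OF V ik])
          then show ?thesis using False by auto
        qed
      qed
    qed
    also have "\<dots> = d i *s (mat_power X (m i - 1) *v g i)"
      using mp by (simp add: sum.delta d_def)
    finally show ?thesis .
  qed
  have "0 = mat_power X s *v (\<Sum>i<k. \<Sum>a<m i. c i a *s (mat_power X a *v g i))" using eq by simp
  also have "\<dots> = (\<Sum>i<k. \<Sum>a<m i. c i a *s (mat_power X (s + a) *v g i))"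
    by (simp add: vec.sum vec.scale mat_power_add matrix_vector_mul_assoc)
  also have "\<dots> = (\<Sum>i<k. d i *s (mat_power X (m i - 1) *v g i))"
    using inner by (intro sum.cong) auto
  finally have "\<forall>i<k. d i = 0" using bottom[OF V] by metis
  moreover have "d i1 = c i1 a1" "c i1 a1 \<noteq> 0" "i1 < k" using i1 unfolding d_def T_def by auto
  ultimately show False by auto
qed


definition Iset :: "nat \<Rightarrow> (nat \<Rightarrow> nat) \<Rightarrow> (nat \<times> nat) set" where
  "Iset k m = Sigma {..<k} (\<lambda>i. {..<m i})"
definition vf :: "(nat \<Rightarrow> complex^'n) \<Rightarrow> nat \<times> nat \<Rightarrow> complex^'n" where
  "vf g p = mat_power X (snd p) *v g (fst p)"

lemma Iset_fin: "finite (Iset k m)" unfolding Iset_def by auto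

lemma indepI:
  assumes V: "valid k g m" and eq: "(\<Sum>p\<in>Iset k m. c p *s vf g p) = 0" and p: "p \<in> Iset k m"
  shows "c p = 0"
proof -
  have "(\<Sum>i<k. \<Sum>a<m i. c (i,a) *s (mat_power X a *v g i)) = (\<Sum>p\<in>Iset k m. c p *s vf g p)"
    unfolding Iset_def vf_def by (subst sum.Sigma) (auto simp: case_prod_beta)
  then have "\<forall>i<k. \<forall>a<m i. c (i,a) = 0" using indep2[OF V, of "\<lambda>i a. c (i,a)"] eq by simp
  then show ?thesis using p unfolding Iset_def by auto
qed

lemma vf_inj: assumes V: "valid k g m" shows "inj_on (vf g) (Iset k m)"
proof (rule inj_onI, rule ccontr)
  fix p q assume pq: "p \<in> Iset k m" "q \<in> Iset k m" "vf g p = vf g q" "p \<noteq> q"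
  define c where "c r = (if r = p then 1 else if r = q then -1 else (0::complex))" for r
  have "c r *s vf g r = (if r = p then vf g r else 0) - (if r = q then vf g r else 0)" for r
    using pq(4) unfolding c_def by auto
  then have "(\<Sum>r\<in>Iset k m. c r *s vf g r) = vf g p - vf g q"
    using pq Iset_fin[of k m] by (simp add: sum_subtractf sum.delta)
  then have "c p = 0" using indepI[OF V _ pq(1)] pq(3) by simp
  then show False unfolding c_def by simp
qed

lemma vf_indep: assumes V: "valid k g m" shows "vec.independent (vf g ` Iset k m)"
proof (rule vec.independent_if_scalars_zero)
  show "finite (vf g ` Iset k m)" using Iset_fin by simp
  fix f x assume eq: "(\<Sum>x\<in>vf g ` Iset k m. f x *s x) = 0" and x: "x \<in> vf g ` Iset k m"
  have "(\<Sum>p\<in>Iset k m. f (vf g p) *s vf g p) = 0"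
    using eq sum.reindex[OF vf_inj[OF V], of "\<lambda>x. f x *s x"] by simp
  then show "f x = 0" using x indepI[OF V, of "\<lambda>p. f (vf g p)"] by auto
qed

lemma k_bound: assumes V: "valid k g m" shows "k \<le> card (cart_basis :: (complex^'n) set)"
proof -
  have "card (vf g ` Iset k m) = card (Iset k m)" using card_image[OF vf_inj[OF V]] .
  also have "\<dots> = (\<Sum>i<k. m i)" unfolding Iset_def by (simp add: card_SigmaI)
  also have "\<dots> \<ge> (\<Sum>i<k. 1)" using V_pos[OF V] by (intro sum_mono) (simp add: Suc_leI)
  finally have "k \<le> card (vf g ` Iset k m)" by simp
  also have "\<dots> \<le> vec.dim (UNIV :: (complex^'n) set)"
    by (rule vec.independent_card_le_dim[OF _ vf_indep[OF V]]) simp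
  finally show ?thesis by (simp add: vec.dim_UNIV)
qed

lemma nakayama:
  assumes W: "vec.subspace W" "\<forall>w\<in>W. X *v w \<in> W" "\<forall>v. \<exists>w\<in>W. \<exists>u. v = w + X *v u"
  shows "W = UNIV"
proof -
  have pw: "mat_power X j *v w \<in> W" if "w \<in> W" for j w
    using that by (induct j) (auto simp: matrix_vector_mul_assoc[symmetric] W(2))
  have "\<forall>v. \<exists>w\<in>W. \<exists>u. v = w + mat_power X j *v u" for j
  proof (induct j)
    case 0
    show ?case using vec.subspace_0[OF W(1)] by force
  next
    case (Suc j)
    show ?case
    proof
      fix v
      obtain w u where wu: "w \<in> W" "v = w + mat_power X j *v u" using Suc by blast
      obtain w' u' where wu': "w' \<in> W" "u = w' + X *v u'" using W(3) by blast
      have "v = (w + mat_power X j *v w') + mat_power X (Suc j) *v u'"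
        using wu wu' by (simp add: vec.add mat_power_Suc2 matrix_vector_mul_assoc add.assoc del: mat_power.simps(2))
      moreover have "w + mat_power X j *v w' \<in> W" using vec.subspace_add[OF W(1) wu(1) pw[OF wu'(1)]] .
      ultimately show "\<exists>w\<in>W. \<exists>u. v = w + mat_power X (Suc j) *v u" by blast
    qed
  qed
  moreover obtain N where "mat_power X N = 0" using nX unfolding nilpotent_mat_def by auto
  ultimately show ?thesis by (metis UNIV_eq_I add.right_neutral matrix_vector_mult_0)
qed

lemma sumsp: assumes "vec.subspace W" shows "vec.subspace {w + X *v u | w u. w \<in> W}"
  unfolding vec.subspace_def
proof (intro conjI ballI allI)
  show "0 \<in> {w + X *v u |w u. w \<in> W}" using vec.subspace_0[OF assms]
    by (metis (mono_tags, lifting) add_0 mem_Collect_eq vec.zero)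
next
  fix x y assume "x \<in> {w + X *v u |w u. w \<in> W}" "y \<in> {w + X *v u |w u. w \<in> W}"
  then obtain w1 u1 w2 u2 where "x = w1 + X *v u1" "y = w2 + X *v u2" "w1 \<in> W" "w2 \<in> W" by blast
  then show "x + y \<in> {w + X *v u |w u. w \<in> W}"
    using vec.subspace_add[OF assms] by (intro CollectI exI[of _ "w1 + w2"] exI[of _ "u1 + u2"])
      (auto simp: vec.add algebra_simps)
next
  fix c x assume "x \<in> {w + X *v u |w u. w \<in> W}"
  then obtain w1 u1 where "x = w1 + X *v u1" "w1 \<in> W" by blast
  then show "c *s x \<in> {w + X *v u |w u. w \<in> W}"
    using vec.subspace_scale[OF assms] by (intro CollectI exI[of _ "c *s w1"] exI[of _ "c *s u1"])
      (auto simp: vec.scale vec.scale_right_distrib)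
qed

lemma span_cover:
  assumes W: "vec.subspace W" "\<forall>i<k. g i \<in> W" and A: "Asp g k = UNIV"
  shows "\<forall>v. \<exists>w\<in>W. \<exists>u. v = w + X *v u"
proof -
  have "g ` {..<k} \<union> XV \<subseteq> {w + X *v u | w u. w \<in> W}"
  proof
    fix x assume "x \<in> g ` {..<k} \<union> XV"
    then consider i where "i < k" "x = g i" | u where "x = X *v u" unfolding XV_def by auto
    then show "x \<in> {w + X *v u | w u. w \<in> W}"
    proof cases
      case 1 then show ?thesis using W(2) by (intro CollectI exI[of _ x] exI[of _ 0]) auto
    next
      case 2 then show ?thesis using vec.subspace_0[OF W(1)] by (intro CollectI exI[of _ 0] exI[of _ u]) auto
    qed
  qed
  then have "Asp g k \<subseteq> {w + X *v u | w u. w \<in> W}"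
    unfolding Asp_def by (rule vec.span_minimal[OF _ sumsp[OF W(1)]])
  then show ?thesis using A by blast
qed

lemma vf_span:
  assumes V: "valid k g m" and A: "Asp g k = UNIV"
  shows "vec.span (vf g ` Iset k m) = UNIV"
proof (rule nakayama)
  let ?W = "vec.span (vf g ` Iset k m)"
  show "vec.subspace ?W" by (rule vec.subspace_span)
  show "\<forall>w\<in>?W. X *v w \<in> ?W"
  proof
    fix w assume w: "w \<in> ?W"
    have "X *v x \<in> ?W" if "x \<in> vf g ` Iset k m" for x
    proof -
      from that obtain i a where "(i,a) \<in> Iset k m" "x = vf g (i,a)" by auto
      then have ia: "i < k" "a < m i" "x = mat_power X a *v g i"
        unfolding Iset_def vf_def by auto
      have "X *v x = mat_power X (Suc a) *v g i" using ia by (simp add: matrix_vector_mul_assoc)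
      show ?thesis
      proof (cases "Suc a < m i")
        case True
        then have "(i, Suc a) \<in> Iset k m" using ia unfolding Iset_def by auto
        then have "vf g (i, Suc a) \<in> ?W" by (intro vec.span_base imageI)
        then show ?thesis using \<open>X *v x = _\<close> unfolding vf_def by simp
      next
        case False
        then have "X *v x = 0" using \<open>X *v x = _\<close> V_ker_ge[OF V ia(1), of "Suc a"] by (simp del: mat_power.simps)
        then show ?thesis using vec.span_zero by simp
      qed
    qed
    then show "X *v w \<in> ?W"
      using linear_span_into[OF matrix_vector_mul_linear_gen vec.subspace_span] w by blast
  qed
  have "\<forall>i<k. g i \<in> ?W"
  proof (intro allI impI)
    fix i assume "i < k"
    then have "(i, 0) \<in> Iset k m" using V_pos[OF V] unfolding Iset_def by auto
    then have "vf g (i, 0) \<in> ?W" by (intro vec.span_base imageI)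
    then show "g i \<in> ?W" unfolding vf_def by simp
  qed
  then show "\<forall>v. \<exists>w\<in>?W. \<exists>u. v = w + X *v u" using span_cover[OF vec.subspace_span _ A] by blast
qed


definition fb :: "(nat \<Rightarrow> complex^'n) \<Rightarrow> (nat \<Rightarrow> nat) \<Rightarrow> nat \<Rightarrow> complex^'n \<Rightarrow> complex^'n" where
  "fb g m k b = (let p = inv_into (Iset k m) (vf g) b in
     if fst p = 0 then 0 else mat_power X (snd p) *v g (fst p - 1))"
definition Yf :: "(nat \<Rightarrow> complex^'n) \<Rightarrow> (nat \<Rightarrow> nat) \<Rightarrow> nat \<Rightarrow> complex^'n \<Rightarrow> complex^'n" where
  "Yf g m k = vec.construct (vf g ` Iset k m) (fb g m k)"

context
  fixes k g m assumes V: "valid k g m" and AU: "Asp g k = UNIV"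
begin

lemma Yf_lin: "Vector_Spaces.linear (*s) (*s) (Yf g m k)"
  unfolding Yf_def by (rule vec.linear_construct[OF vf_indep[OF V]])

lemma Yf_basis: "p \<in> Iset k m \<Longrightarrow>
   Yf g m k (vf g p) = (if fst p = 0 then 0 else mat_power X (snd p) *v g (fst p - 1))"
  unfolding Yf_def
  by (simp add: vec.construct_basis[OF vf_indep[OF V]] fb_def inv_into_f_f[OF vf_inj[OF V]])

lemma Yf_g: "i < k \<Longrightarrow> Yf g m k (g i) = (if i = 0 then 0 else g (i - 1))"
  using Yf_basis[of "(i,0)"] V_pos[OF V, of i] unfolding Iset_def vf_def by auto

lemma Yf_comm: "Yf g m k (X *v v) = X *v Yf g m k v"
proof -
  interpret L: Vector_Spaces.linear "(*s)" "(*s)" "Yf g m k" by (rule Yf_lin)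
  have l1: "Vector_Spaces.linear (*s) (*s) (Yf g m k \<circ> (\<lambda>v. X *v v))"
    by (rule Vector_Spaces.linear_compose[OF matrix_vector_mul_linear_gen Yf_lin])
  have l2: "Vector_Spaces.linear (*s) (*s) ((\<lambda>v. X *v v) \<circ> Yf g m k)"
    by (rule Vector_Spaces.linear_compose[OF Yf_lin matrix_vector_mul_linear_gen])
  have "(Yf g m k \<circ> (\<lambda>v. X *v v)) v = ((\<lambda>v. X *v v) \<circ> Yf g m k) v"
  proof (rule vec.linear_eq_on_span[OF l1 l2])
    show "v \<in> vec.span (vf g ` Iset k m)" using vf_span[OF V AU] by simp
    fix x assume "x \<in> vf g ` Iset k m"
    then obtain i a where ia0: "(i,a) \<in> Iset k m" "x = vf g (i,a)" by auto
    then have ia: "i < k" "a < m i" "x = mat_power X a *v g i" unfolding Iset_def vf_def by auto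
    have Xx: "X *v x = mat_power X (Suc a) *v g i" using ia by (simp add: matrix_vector_mul_assoc)
    have Yx: "Yf g m k x = (if i = 0 then 0 else mat_power X a *v g (i - 1))"
      using Yf_basis[OF ia0(1)] ia0(2) by simp
    show "(Yf g m k \<circ> (\<lambda>v. X *v v)) x = ((\<lambda>v. X *v v) \<circ> Yf g m k) x"
    proof (cases "Suc a < m i")
      case True
      then have "(i, Suc a) \<in> Iset k m" using ia unfolding Iset_def by auto
      from Yf_basis[OF this] have "Yf g m k (X *v x) = (if i = 0 then 0 else mat_power X (Suc a) *v g (i - 1))"
        using Xx unfolding vf_def by simp
      then show ?thesis using Yx by (simp add: matrix_vector_mul_assoc)
    next
      case False
      then have "X *v x = 0" using Xx V_ker_ge[OF V ia(1), of "Suc a"] by (simp del: mat_power.simps)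
      moreover have "X *v Yf g m k x = 0"
      proof (cases "i = 0")
        case False
        have "m (i - 1) \<le> m i" using V_mono[OF V ia(1), of "i - 1"] False by simp
        then have "mat_power X (Suc a) *v g (i - 1) = 0"
          using \<open>\<not> Suc a < m i\<close> V_ker_ge[OF V, of "i - 1" "Suc a"] ia(1) by simp
        then show ?thesis using Yx False by (simp add: matrix_vector_mul_assoc)
      qed (simp add: Yx)
      ultimately show ?thesis by (simp add: L.zero)
    qed
  qed
  then show ?thesis by simp
qed

lemma Yf_Asp: "Suc i \<le> k \<Longrightarrow> v \<in> Asp g (Suc i) \<Longrightarrow> Yf g m k v \<in> Asp g i"
  unfolding Asp_def[of g "Suc i"]
proof (erule linear_span_into[OF Yf_lin Asp_sub, rotated])
  fix x assume i: "Suc i \<le> k" and x: "x \<in> g ` {..<Suc i} \<union> XV"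
  then consider j where "j < Suc i" "x = g j" | u where "x = X *v u" unfolding XV_def by auto
  then show "Yf g m k x \<in> Asp g i"
  proof cases
    case 1
    then show ?thesis using Yf_g[of j] i g_Asp[of "j - 1" i g] vec.subspace_0[OF Asp_sub] by auto
  next
    case 2
    then show ?thesis using Yf_comm XA by simp
  qed
qed

lemma Y_Asp: "Suc i \<le> k \<Longrightarrow> v \<in> Asp g (Suc i) \<Longrightarrow> Y *v v \<in> Asp g i"
  unfolding Asp_def[of g "Suc i"]
proof (erule linear_span_into[OF matrix_vector_mul_linear_gen Asp_sub, rotated])
  fix x assume i: "Suc i \<le> k" and x: "x \<in> g ` {..<Suc i} \<union> XV"
  then consider j where "j < Suc i" "x = g j" | u where "x = X *v u" unfolding XV_def by auto
  then show "Y *v x \<in> Asp g i"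
  proof cases
    case 1
    then show ?thesis using V_Y[OF V, of j] i Asp_mono[of j i g] by auto
  next
    case 2
    then show ?thesis using YX XA by simp
  qed
qed

lemma Z_nil:
  assumes ZX: "Z ** X = X ** Z" and ZA: "\<And>i v. Suc i \<le> k \<Longrightarrow> v \<in> Asp g (Suc i) \<Longrightarrow> Z *v v \<in> Asp g i"
  shows "nilpotent_mat Z"
proof -
  have "\<forall>v. mat_power Z j *v v \<in> Asp g (k - j)" if "j \<le> k" for j
    using that
  proof (induct j)
    case 0 then show ?case using AU by simp
  next
    case (Suc j)
    then have "Suc (k - Suc j) \<le> k" "k - j = Suc (k - Suc j)" by auto
    then show ?case using Suc ZA by (simp add: matrix_vector_mul_assoc[symmetric])
  qed
  then have Zk: "\<forall>v. mat_power Z k *v v \<in> XV" using Asp0 by (metis diff_self_eq_0 order_refl)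
  have "\<forall>v. \<exists>u. mat_power Z (k * j) *v v = mat_power X j *v u" for j
  proof (induct j)
    case 0 then show ?case by (metis matrix_vector_mul_lid mat_power.simps(1) mult_0_right)
  next
    case (Suc j)
    show ?case
    proof
      fix v
      obtain u0 where u0: "mat_power Z k *v v = X *v u0" using Zk unfolding XV_def by blast
      obtain u1 where u1: "mat_power Z (k * j) *v u0 = mat_power X j *v u1" using Suc by blast
      have "mat_power Z (k * Suc j) *v v = mat_power Z (k * j) *v (mat_power Z k *v v)"
        using mat_power_add[of Z "k * j" k] by (simp add: matrix_vector_mul_assoc add.commute)
      also have "\<dots> = X *v (mat_power X j *v u1)"
        using u0 u1 mat_power_comm_v[of Z X "k * j" u0, OF ZX] by simp
      also have "\<dots> = mat_power X (Suc j) *v u1" by (simp add: matrix_vector_mul_assoc)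
      finally show "\<exists>u. mat_power Z (k * Suc j) *v v = mat_power X (Suc j) *v u" by blast
    qed
  qed
  moreover obtain N where "mat_power X N = 0" using nX unfolding nilpotent_mat_def by auto
  ultimately have "\<forall>v. mat_power Z (k * N) *v v = 0 *v v" by (metis matrix_vector_mult_0)
  then have "mat_power Z (k * N) = 0" by (simp add: matrix_eq)
  then show ?thesis unfolding nilpotent_mat_def by blast
qed

lemma final: "\<exists>B2' :: complex^'n^'n. \<exists>w :: complex^'n.
           nilpotent_mat B2' \<and>
           B2' ** X = X ** B2' \<and>
           (\<forall>\<alpha> \<beta> :: complex. nilpotent_mat (mat \<alpha> ** Y + mat \<beta> ** B2')) \<and>
           cyclic_pair X B2' w"
proof -
  define Ym where "Ym = matrix (Yf g m k)"
  have Ymv: "Ym *v v = Yf g m k v" for v unfolding Ym_def by (rule matrix_works[OF Yf_lin])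
  have comm: "Ym ** X = X ** Ym"
    by (simp add: matrix_eq matrix_vector_mul_assoc[symmetric] Ymv Yf_comm)
  have pencil: "nilpotent_mat (mat \<alpha> ** Y + mat \<beta> ** Ym)" for \<alpha> \<beta>
  proof (rule Z_nil)
    let ?Z = "mat \<alpha> ** Y + mat \<beta> ** Ym"
    have Zv: "?Z *v v = \<alpha> *s (Y *v v) + \<beta> *s Yf g m k v" for v
      by (simp add: matrix_vector_mult_add_rdistrib matrix_vector_mul_assoc[symmetric] mat_scal_v Ymv)
    show "?Z ** X = X ** ?Z"
      by (simp add: matrix_eq matrix_vector_mul_assoc[symmetric] Zv Yf_comm YX vec.add vec.scale
          del: matrix_vector_mult_add_rdistrib)
    fix i v assume "Suc i \<le> k" "v \<in> Asp g (Suc i)"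
    then show "?Z *v v \<in> Asp g i" unfolding Zv
      using Yf_Asp Y_Asp vec.subspace_add[OF Asp_sub] vec.subspace_scale[OF Asp_sub] by blast
  qed
  have "mat 0 ** Y + mat 1 ** Ym = Ym" by (simp add: mat_0)
  then have nil: "nilpotent_mat Ym" using pencil[of 0 1] by simp
  have cyc: "cyclic_pair X Ym (g (k - 1))"
    unfolding cyclic_pair_def
  proof (intro allI impI)
    fix W :: "(complex^'n) set"
    assume H: "vec.subspace W \<and> (\<forall>x\<in>W. X *v x \<in> W) \<and> (\<forall>x\<in>W. Ym *v x \<in> W) \<and> g (k - 1) \<in> W"
    have "j < k \<Longrightarrow> g (k - 1 - j) \<in> W" for j
    proof (induct j)
      case 0 then show ?case using H by simp
    next
      case (Suc j)
      then have "k - 1 - j < k" "k - 1 - j \<noteq> 0" "k - 1 - j - 1 = k - 1 - Suc j" by auto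
      then have "Yf g m k (g (k - 1 - j)) = g (k - 1 - Suc j)" using Yf_g by simp
      then show ?case using Suc H Ymv by (metis Suc_lessD)
    qed
    then have "\<forall>i<k. g i \<in> W" by (metis diff_diff_cancel diff_less_Suc less_Suc_eq_le Suc_pred' le_less_trans not_less_zero zero_less_iff_neq_zero diff_le_self)
    then show "W = UNIV" using nakayama H span_cover[OF _ _ AU] by blast
  qed
  show ?thesis using nil comm pencil cyc by blast
qed

end

end

theorem lemma7p3:
  fixes B1 B2 :: "complex^'n^'n"
  assumes "nilpotent_mat B1" and "nilpotent_mat B2" and "B1 ** B2 = B2 ** B1"
  shows "\<exists>B2' :: complex^'n^'n. \<exists>w :: complex^'n.
           nilpotent_mat B2' \<and>
           B2' ** B1 = B1 ** B2' \<and>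
           (\<forall>\<alpha> \<beta> :: complex. nilpotent_mat (mat \<alpha> ** B2 + mat \<beta> ** B2')) \<and>
           cyclic_pair B1 B2' w"
proof -
  interpret cn B1 B2 by unfold_locales (rule assms)+
  obtain k g m where kgm: "valid k g m" "k = Suc (card (cart_basis :: (complex^'n) set)) \<or> Asp g k = UNIV"
    using construct_t by blast
  then have "Asp g k = UNIV" using k_bound[OF kgm(1)] by auto
  then show ?thesis using final[OF kgm(1)] by blast
qed

end
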